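(* Let $N$ be a complex two-step nilpotent Lie algebra whose center has dimension $p=2$, with $q=\dim N-2$, and suppose the marginal rank of $N$ equals $q$. Let $(X,I)$ be a basis of $N$ and let $A=\mathcal A_{\cdot\cdot 1}$, $B=\mathcal A_{\cdot\cdot 2}$ be the two slices of its representation tensor $\mathcal A=\mathcal A(X,I)$. If \[ \operatorname{rank}(c_{11}A+c_{12}B)+\operatorname{rank}(c_{21}A+c_{22}B)>q \] for every nonsingular matrix $C=(c_{ij})\in\mathbb C^{2\times 2}$, then $N$ is indecomposable.
   Context: A basis $(X,I)$ of $N$ consists of $I=\{\mathbf y_1,\mathbf y_2\}$, a basis of the center of $N$, and $X=\{\mathbf x_1,\dots,\mathbf x_q\}$ such that $X\cup I$ is a basis of $N$. Its representation tensor $\mathcal A(X,I)=(a_{ijk})\in\mathbb C^{q\times q\times 2}$ is defined by $a_{ijk}=\alpha_k$ where $[\mathbf x_i,\mathbf x_j]=\alpha_1\mathbf y_1+\alpha_2\mathbf y_2$; $\mathcal A_{\cdot\cdot k}=(a_{ijk})_{i,j}$. The marginal rank of $N$ is the rank of the $q\times 2q$ matrix $[\mathcal A_{\cdot\cdot 1},\mathcal A_{\cdot\cdot 2}]$ (independent of the basis). A Lie algebra is indecomposable if it is not a direct sum of two nonzero ideals. *)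

theory Defs
  imports "HOL-Analysis.Analysis"
begin

definition lie_algebra :: "(complex \<Rightarrow> 'a::ab_group_add \<Rightarrow> 'a) \<Rightarrow> ('a \<Rightarrow> 'a \<Rightarrow> 'a) \<Rightarrow> bool" where
  "lie_algebra sc br \<longleftrightarrow>
     vector_space sc \<and>
     (\<forall>x. Vector_Spaces.linear sc sc (br x)) \<and> (\<forall>y. Vector_Spaces.linear sc sc (\<lambda>x. br x y)) \<and>
     (\<forall>x. br x x = 0) \<and>
     (\<forall>x y z. br x (br y z) + br y (br z x) + br z (br x y) = 0)"

definition fin_dim_space :: "(complex \<Rightarrow> 'a::ab_group_add \<Rightarrow> 'a) \<Rightarrow> bool" where
  "fin_dim_space sc \<longleftrightarrow> (\<exists>S. finite S \<and> module.span sc S = UNIV)"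

definition lie_center :: "('a \<Rightarrow> 'a \<Rightarrow> 'a::ab_group_add) \<Rightarrow> 'a set" where
  "lie_center br = {z. \<forall>x. br z x = 0}"

definition two_step_nilpotent :: "('a \<Rightarrow> 'a \<Rightarrow> 'a::ab_group_add) \<Rightarrow> bool" where
  "two_step_nilpotent br \<longleftrightarrow> (\<forall>x y z. br (br x y) z = 0) \<and> (\<exists>x y. br x y \<noteq> 0)"

definition lie_ideal :: "(complex \<Rightarrow> 'a::ab_group_add \<Rightarrow> 'a) \<Rightarrow> ('a \<Rightarrow> 'a \<Rightarrow> 'a) \<Rightarrow> 'a set \<Rightarrow> bool" where
  "lie_ideal sc br J \<longleftrightarrow> module.subspace sc J \<and> (\<forall>x\<in>J. \<forall>y. br y x \<in> J)"

definition lie_indecomposable :: "(complex \<Rightarrow> 'a::ab_group_add \<Rightarrow> 'a) \<Rightarrow> ('a \<Rightarrow> 'a \<Rightarrow> 'a) \<Rightarrow> bool" where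
  "lie_indecomposable sc br \<longleftrightarrow>
     \<not> (\<exists>J K. lie_ideal sc br J \<and> lie_ideal sc br K \<and> J \<noteq> {0} \<and> K \<noteq> {0} \<and>
              J \<inter> K = {0} \<and> {j + k | j k. j \<in> J \<and> k \<in> K} = UNIV)"

definition adapted_basis ::
  "(complex \<Rightarrow> 'a::ab_group_add \<Rightarrow> 'a) \<Rightarrow> ('a \<Rightarrow> 'a \<Rightarrow> 'a) \<Rightarrow> ('n \<Rightarrow> 'a) \<Rightarrow> 'a \<Rightarrow> 'a \<Rightarrow> bool" where
  "adapted_basis sc br x y1 y2 \<longleftrightarrow>
     y1 \<noteq> y2 \<and> \<not> module.dependent sc {y1, y2} \<and> module.span sc {y1, y2} = lie_center br \<and>
     inj x \<and> range x \<inter> {y1, y2} = {} \<and>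
     \<not> module.dependent sc (range x \<union> {y1, y2}) \<and> module.span sc (range x \<union> {y1, y2}) = UNIV"

definition hcat :: "complex^'n^'m \<Rightarrow> complex^'n^'m \<Rightarrow> complex^('n + 'n)^'m" where
  "hcat A B = (\<chi> i j. case j of Inl k \<Rightarrow> A $ i $ k | Inr k \<Rightarrow> B $ i $ k)"

end

theory Submission
  imports Defs
begin


locale lie_ctx = vector_space sc for sc :: "complex \<Rightarrow> 'a::ab_group_add \<Rightarrow> 'a" +
  fixes br :: "'a \<Rightarrow> 'a \<Rightarrow> 'a"
  assumes linr: "\<And>x. Vector_Spaces.linear sc sc (br x)"
    and linl: "\<And>y. Vector_Spaces.linear sc sc (\<lambda>x. br x y)"
    and alt: "\<And>x. br x x = 0"
begin

lemma br_add_r: "br a (b + c) = br a b + br a c"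
  using linr[of a] unfolding Vector_Spaces.linear_def module_hom_def module_hom_axioms_def by blast
lemma br_add_l: "br (a + b) c = br a c + br b c"
  using linl[of c] unfolding Vector_Spaces.linear_def module_hom_def module_hom_axioms_def by blast
lemma br_sc_r: "br a (sc t b) = sc t (br a b)"
  using linr[of a] unfolding Vector_Spaces.linear_def module_hom_def module_hom_axioms_def by blast
lemma br_sc_l: "br (sc t a) b = sc t (br a b)"
  using linl[of b] unfolding Vector_Spaces.linear_def module_hom_def module_hom_axioms_def by blast
lemma mh_r: "module_hom sc sc (br a)"
  using linr[of a] unfolding Vector_Spaces.linear_def by blast
lemma mh_l: "module_hom sc sc (\<lambda>x. br x b)"
  using linl[of b] unfolding Vector_Spaces.linear_def by blast
lemma br_sum_r: "br a (sum f S) = (\<Sum>i\<in>S. br a (f i))"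
  by (rule module_hom.sum[OF mh_r])
lemma br_sum_l: "br (sum f S) b = (\<Sum>i\<in>S. br (f i) b)"
  using module_hom.sum[OF mh_l, of f S] by simp
lemma br_0_r[simp]: "br a 0 = 0"
  by (rule module_hom.zero[OF mh_r])
lemma br_0_l[simp]: "br 0 b = 0"
  using module_hom.zero[OF mh_l] by simp
lemma br_diff_r: "br a (b - c) = br a b - br a c"
  by (rule module_hom.diff[OF mh_r])
lemma br_diff_l: "br (a - b) c = br a c - br b c"
  using module_hom.diff[OF mh_l] by simp
lemma br_anti: "br a b = - br b a"
proof -
  have "0 = br (a + b) (a + b)" by (simp add: alt)
  also have "\<dots> = br a b + br b a" by (subst br_add_l) (simp add: br_add_r alt)
  finally have "br a b + br b a = 0" by simp
  then show ?thesis by (simp add: eq_neg_iff_add_eq_0)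
qed

end

lemma lie_ctx_of: "lie_algebra sc br \<Longrightarrow> lie_ctx sc br"
  unfolding lie_algebra_def lie_ctx_def lie_ctx_axioms_def by blast



lemma rank_mul_le_right_gen:
  fixes A :: "'a::field^'n^'m" and B :: "'a^'p^'n"
  shows "rank (A ** B) \<le> rank B"
proof -
  have "rows (A ** B) \<subseteq> vec.span (rows B)"
  proof
    fix v assume "v \<in> rows (A ** B)"
    then obtain i where v: "v = row i (A ** B)" by (auto simp: rows_def)
    have "v = (\<Sum>k\<in>UNIV. (A$i$k) *s row k B)"
      unfolding v by (simp add: vec_eq_iff row_def matrix_matrix_mult_def sum_component)
    also have "\<dots> \<in> vec.span (rows B)"
      by (intro vec.span_sum vec.span_scale vec.span_base) (auto simp: rows_def)
    finally show "v \<in> vec.span (rows B)" .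
  qed
  then show ?thesis unfolding row_rank_def_gen by (rule vec.dim_mono)
qed

lemma rank_idem_sum:
  fixes E :: "'a::field^'n^'n"
  assumes idem: "E ** E = E"
  shows "rank E + rank (mat 1 - E) \<le> CARD('n)"
proof -
  define S where "S = vec.span (rows E)"
  define T where "T = vec.span (rows (mat 1 - E))"
  have sub1: "vec.subspace {v. v v* E = v}"
    unfolding vec.subspace_def
    by (auto simp: vec_eq_iff vector_matrix_mult_def sum.distrib algebra_simps mult.assoc simp flip: sum_distrib_left)
  have sub2: "vec.subspace {v. v v* E = 0}"
    unfolding vec.subspace_def
    by (auto simp: vec_eq_iff vector_matrix_mult_def sum.distrib algebra_simps mult.assoc simp flip: sum_distrib_left)
  have e: "E$i$j = (\<Sum>k\<in>UNIV. E$i$k * E$k$j)" for i j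
    using arg_cong[OF idem, of "\<lambda>M. M$i$j"] by (simp add: matrix_matrix_mult_def)
  have r1: "rows E \<subseteq> {v. v v* E = v}"
    by (auto simp: rows_def row_def vec_eq_iff vector_matrix_mult_def e[symmetric] mult.commute)
  have r2: "rows (mat 1 - E) \<subseteq> {v. v v* E = 0}"
  proof
    fix v assume "v \<in> rows (mat 1 - E)"
    then obtain i where v: "v = row i (mat 1 - E)" by (auto simp: rows_def)
    have "(v v* E) $ j = 0" for j
    proof -
      have "(v v* E) $ j = (\<Sum>k\<in>UNIV. ((if i = k then 1 else 0) - E$i$k) * E$k$j)"
        by (simp add: v vector_matrix_mult_def row_def mat_def mult.commute)
      also have "\<dots> = (\<Sum>k\<in>UNIV. (if i = k then 1 else 0) * E$k$j) - (\<Sum>k\<in>UNIV. E$i$k * E$k$j)"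
        by (simp add: left_diff_distrib sum_subtractf)
      also have "\<dots> = 0" by (simp add: e[symmetric] if_distrib[of "\<lambda>x. x * _"] cong: if_cong)
      finally show ?thesis .
    qed
    then show "v \<in> {v. v v* E = 0}" by (simp add: vec_eq_iff)
  qed
  have "S \<subseteq> {v. v v* E = v}" unfolding S_def by (rule vec.span_minimal[OF r1 sub1])
  moreover have "T \<subseteq> {v. v v* E = 0}" unfolding T_def by (rule vec.span_minimal[OF r2 sub2])
  ultimately have "S \<inter> T \<subseteq> {0}"
  proof (intro subsetI)
    fix v assume h1: "S \<subseteq> {v. v v* E = v}" and h2: "T \<subseteq> {v. v v* E = 0}" and "v \<in> S \<inter> T"
    then have "v v* E = v" "v v* E = 0" by blast+
    then show "v \<in> {0}" by simp
  qed
  then have d0: "vec.dim (S \<inter> T) = 0"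
    by (metis vec.dim_eq_0 vec.span_empty vec.span_insert_0 vec.subspace_span)
  have d1: "vec.dim {x + y |x y. x \<in> S \<and> y \<in> T} + vec.dim (S \<inter> T) = vec.dim S + vec.dim T"
    by (rule vec.dim_sums_Int) (auto simp: S_def T_def)
  have d2: "vec.dim {x + y |x y. x \<in> S \<and> y \<in> T} \<le> CARD('n)"
    by (rule dim_subset_UNIV_cart_gen)
  have "rank E = vec.dim S" "rank (mat 1 - E) = vec.dim T"
    by (simp_all add: row_rank_def_gen S_def T_def)
  then show ?thesis using d0 d1 d2 by linarith
qed



context lie_ctx begin

lemma central_r: "z \<in> lie_center br \<Longrightarrow> br a z = 0"
proof -
  assume "z \<in> lie_center br"
  then have "br z a = 0" by (simp add: lie_center_def)
  then show ?thesis by (subst br_anti) simp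
qed
lemma central_l: "z \<in> lie_center br \<Longrightarrow> br z a = 0"
  by (simp add: lie_center_def)

lemma brsum:
  fixes x :: "'n::finite \<Rightarrow> 'a"
  shows "br (\<Sum>l\<in>UNIV. sc (R l) (x l)) (\<Sum>r\<in>UNIV. sc (S r) (x r))
       = (\<Sum>l\<in>UNIV. \<Sum>r\<in>UNIV. sc (R l * S r) (br (x l) (x r)))"
  by (simp add: br_sum_l br_sum_r br_sc_l br_sc_r scale_sum_right) (subst sum.swap, simp add: mult.commute)

lemma brsum2:
  fixes x :: "'n::finite \<Rightarrow> 'a" and A B :: "complex^'n^'n"
  assumes tensor: "\<And>i j. br (x i) (x j) = sc (A $ i $ j) y1 + sc (B $ i $ j) y2"
  shows "br (\<Sum>l\<in>UNIV. sc (R l) (x l)) (\<Sum>r\<in>UNIV. sc (S r) (x r))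
       = sc (\<Sum>l\<in>UNIV. \<Sum>r\<in>UNIV. R l * S r * A$l$r) y1 + sc (\<Sum>l\<in>UNIV. \<Sum>r\<in>UNIV. R l * S r * B$l$r) y2"
  by (simp add: brsum tensor scale_right_distrib sum.distrib scale_sum_left)

end



context lie_ctx begin

lemma span2: "span {y1, y2} = {z. \<exists>p q. z = sc p y1 + sc q y2}"
proof -
  have "z \<in> span (insert y1 {y2}) \<longleftrightarrow> (\<exists>p q. z = sc p y1 + sc q y2)" for z
  proof -
    have "z \<in> span (insert y1 {y2}) \<longleftrightarrow> (\<exists>k. z - sc k y1 \<in> span {y2})"
      by (rule span_breakdown_eq)
    also have "\<dots> \<longleftrightarrow> (\<exists>p q. z = sc p y1 + sc q y2)"
      unfolding span_singleton
    proof
      assume "\<exists>k. z - sc k y1 \<in> range (\<lambda>k. sc k y2)"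
      then obtain k q where "z - sc k y1 = sc q y2" by blast
      then have "z = sc k y1 + sc q y2" by (metis add.commute diff_eq_eq)
      then show "\<exists>p q. z = sc p y1 + sc q y2" by blast
    next
      assume "\<exists>p q. z = sc p y1 + sc q y2"
      then obtain p q where "z = sc p y1 + sc q y2" by blast
      then have "z - sc p y1 = sc q y2" by simp
      then show "\<exists>k. z - sc k y1 \<in> range (\<lambda>k. sc k y2)" by blast
    qed
    finally show ?thesis .
  qed
  then show ?thesis by auto
qed

lemma ind2:
  assumes "y1 \<noteq> y2" "\<not> dependent {y1, y2}" "sc p y1 + sc q y2 = 0"
  shows "p = 0 \<and> q = 0"
proof -
  let ?u = "\<lambda>v. if v = y1 then p else q"
  have s: "(\<Sum>v\<in>{y1, y2}. sc (?u v) v) = 0" using assms by simp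
  have "?u y1 = 0" by (rule independentD[OF assms(2) _ _ s]) auto
  moreover have "?u y2 = 0" by (rule independentD[OF assms(2) _ _ s]) auto
  ultimately show ?thesis using assms(1) by auto
qed

lemma indX:
  fixes x :: "'n::finite \<Rightarrow> 'a"
  assumes inj: "inj x" and disj: "range x \<inter> {y1, y2} = {}" and "y1 \<noteq> y2"
    and ind: "\<not> dependent (range x \<union> {y1, y2})"
    and eq: "(\<Sum>r\<in>UNIV. sc (c r) (x r)) + sc p y1 + sc q y2 = 0"
  shows "c r = 0"
proof -
  define u where "u v = (if v \<in> range x then c (inv x v) else if v = y1 then p else q)" for v
  have "(\<Sum>v\<in>range x \<union> {y1, y2}. sc (u v) v) = (\<Sum>v\<in>range x. sc (u v) v) + (\<Sum>v\<in>{y1, y2}. sc (u v) v)"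
    by (rule sum.union_disjoint) (use disj in auto)
  also have "(\<Sum>v\<in>range x. sc (u v) v) = (\<Sum>r\<in>UNIV. sc (u (x r)) (x r))"
    by (rule sum.reindex[OF inj, unfolded comp_def])
  also have "\<dots> = (\<Sum>r\<in>UNIV. sc (c r) (x r))"
    by (simp add: u_def inv_f_f[OF inj])
  also have "(\<Sum>v\<in>{y1, y2}. sc (u v) v) = sc p y1 + sc q y2"
    using disj \<open>y1 \<noteq> y2\<close> by (auto simp: u_def)
  finally have s: "(\<Sum>v\<in>range x \<union> {y1, y2}. sc (u v) v) = 0" using eq by (simp add: add.assoc)
  have "u (x r) = 0" by (rule independentD[OF ind _ _ s]) auto
  then show ?thesis by (simp add: u_def inv_f_f[OF inj])
qed

lemma spanX:
  fixes x :: "'n::finite \<Rightarrow> 'a"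
  assumes inj: "inj x" and sp: "span (range x \<union> {y1, y2}) = UNIV"
  shows "\<exists>c p q. v = (\<Sum>r\<in>UNIV. sc (c r) (x r)) + sc p y1 + sc q y2"
proof -
  have "v \<in> span (range x \<union> {y1, y2})" using sp by simp
  then obtain a b where ab: "v = a + b" "a \<in> span (range x)" "b \<in> span {y1, y2}"
    unfolding span_Un by blast
  from ab(2) obtain u where "a = (\<Sum>v\<in>range x. sc (u v) v)"
    using span_finite[of "range x"] by auto
  also have "\<dots> = (\<Sum>r\<in>UNIV. sc (u (x r)) (x r))"
    by (rule sum.reindex[OF inj, unfolded comp_def])
  finally have a: "a = (\<Sum>r\<in>UNIV. sc (u (x r)) (x r))" .
  from ab(3) obtain p q where "b = sc p y1 + sc q y2" unfolding span2 by blast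
  with a ab(1) show ?thesis by (metis add.assoc)
qed

end



context lie_ctx begin

lemma comb2: "sc s (sc a y1 + sc b y2) + sc t (sc c y1 + sc d y2) = sc (s*a + t*c) y1 + sc (s*b + t*d) y2"
  by (simp add: scale_right_distrib scale_left_distrib algebra_simps)

lemma coef:
  fixes x :: "'n::finite \<Rightarrow> 'a" and A B :: "complex^'n^'n"
  assumes tensor: "\<And>i j. br (x i) (x j) = sc (A $ i $ j) y1 + sc (B $ i $ j) y2"
    and z: "z \<in> lie_center br" and z': "z' \<in> lie_center br"
  shows "br ((\<Sum>l\<in>UNIV. sc (R l) (x l)) + z) ((\<Sum>r\<in>UNIV. sc (S r) (x r)) + z')
       = sc (\<Sum>l\<in>UNIV. \<Sum>r\<in>UNIV. R l * S r * A$l$r) y1 + sc (\<Sum>l\<in>UNIV. \<Sum>r\<in>UNIV. R l * S r * B$l$r) y2"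
  using brsum2[OF tensor, of R S]
  by (simp add: br_add_l br_add_r central_l[OF z] central_r[OF z'])

end

lemma mat_entry:
  fixes P M :: "'a::comm_ring_1^'n::finite^'n"
  shows "((P ** M) ** transpose P)$i$m = (\<Sum>l\<in>UNIV. \<Sum>r\<in>UNIV. P$i$l * P$m$r * M$l$r)"
  by (simp add: matrix_matrix_mult_def transpose_def sum_distrib_right sum_distrib_left algebra_simps)
     (subst sum.swap, simp)



theorem lemma7:
  fixes sc :: "complex \<Rightarrow> 'a::ab_group_add \<Rightarrow> 'a"
    and br :: "'a \<Rightarrow> 'a \<Rightarrow> 'a"
    and x :: "'n::finite \<Rightarrow> 'a" and y1 y2 :: 'a
    and A B :: "complex^'n^'n"
  assumes lie: "lie_algebra sc br"
    and fin: "fin_dim_space sc"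
    and nil: "two_step_nilpotent br"
    and cdim: "vector_space.dim sc (lie_center br) = 2"
    and qdef: "CARD('n) = vector_space.dim sc (UNIV :: 'a set) - 2"
    and basis: "adapted_basis sc br x y1 y2"
    and tensor: "\<And>i j. br (x i) (x j) = sc (A $ i $ j) y1 + sc (B $ i $ j) y2"
    and marg: "rank (hcat A B) = CARD('n)"
    and hyp: "\<And>c11 c12 c21 c22 :: complex. c11 * c22 - c12 * c21 \<noteq> 0 \<Longrightarrow>
              rank (\<chi> i j. c11 * A $ i $ j + c12 * B $ i $ j)
            + rank (\<chi> i j. c21 * A $ i $ j + c22 * B $ i $ j) > CARD('n)"
  shows "lie_indecomposable sc br"
proof -
  interpret L: lie_ctx sc br by (rule lie_ctx_of[OF lie])
  let ?Z = "lie_center br"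
  have y12: "y1 \<noteq> y2" "\<not> L.dependent {y1, y2}" "L.span {y1, y2} = ?Z" "inj x"
    "range x \<inter> {y1, y2} = {}" "\<not> L.dependent (range x \<union> {y1, y2})"
    "L.span (range x \<union> {y1, y2}) = UNIV"
    using basis unfolding adapted_basis_def by auto
  have Zc: "z \<in> ?Z \<longleftrightarrow> (\<exists>p q. z = sc p y1 + sc q y2)" for z
    using y12(3) L.span2[of y1 y2] by auto
  have subZ: "L.subspace ?Z" using y12(3) L.subspace_span by metis
  have ind2: "p = p' \<and> q = q'" if "sc p y1 + sc q y2 = sc p' y1 + sc q' y2" for p q p' q'
  proof -
    have "sc (p - p') y1 + sc (q - q') y2 = 0"
      using that by (simp add: L.scale_left_diff_distrib algebra_simps)
    then show ?thesis using L.ind2[OF y12(1,2)] by fastforce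
  qed
  have centr: "br a b \<in> ?Z" for a b
    using nil unfolding two_step_nilpotent_def lie_center_def by auto
  show ?thesis unfolding lie_indecomposable_def
  proof
    assume "\<exists>J K. lie_ideal sc br J \<and> lie_ideal sc br K \<and> J \<noteq> {0} \<and> K \<noteq> {0} \<and>
              J \<inter> K = {0} \<and> {j + k | j k. j \<in> J \<and> k \<in> K} = UNIV"
    then obtain J K where J: "lie_ideal sc br J" and K: "lie_ideal sc br K"
      and J0: "J \<noteq> {0}" and K0: "K \<noteq> {0}" and JK: "J \<inter> K = {0}"
      and sum: "{j + k | j k. j \<in> J \<and> k \<in> K} = UNIV" by blast
    have sJ: "L.subspace J" and sK: "L.subspace K"
      using J K unfolding lie_ideal_def by auto
    have idJ1: "br b a \<in> J" if "a \<in> J" for a b using J that unfolding lie_ideal_def by auto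
    have idJ2: "br a b \<in> J" if "a \<in> J" for a b
      using idJ1[OF that, of b] L.br_anti[of a b] L.subspace_neg[OF sJ] by metis
    have idK1: "br b a \<in> K" if "a \<in> K" for a b using K that unfolding lie_ideal_def by auto
    have idK2: "br a b \<in> K" if "a \<in> K" for a b
      using idK1[OF that, of b] L.br_anti[of a b] L.subspace_neg[OF sK] by metis
    have JK0: "v = 0" if "v \<in> J" "v \<in> K" for v using JK that by blast
    have cross: "br j k = 0" if "j \<in> J" "k \<in> K" for j k
      using JK0 idJ2[OF that(1)] idK1[OF that(2)] by blast
    have cross': "br k j = 0" if "j \<in> J" "k \<in> K" for j k
      using cross[OF that] L.br_anti[of k j] by simp
    have dec: "\<exists>j k. j \<in> J \<and> k \<in> K \<and> v = j + k" for v
      using sum by blast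
    have exu: "\<exists>u. u \<in> ?Z \<and> u \<in> J \<and> u \<noteq> 0"
    proof (rule ccontr)
      assume no: "\<not> ?thesis"
      obtain j where j: "j \<in> J" "j \<noteq> 0" using J0 L.subspace_0[OF sJ] by blast
      have "j \<in> ?Z" unfolding lie_center_def
      proof (clarify)
        fix a
        obtain j' k where jk: "j' \<in> J" "k \<in> K" "a = j' + k" using dec by blast
        then have "br j a = br j j'" by (simp add: L.br_add_r cross j)
        moreover have "br j j' = 0" using no centr idJ2[OF j(1)] by blast
        ultimately show "br j a = 0" by simp
      qed
      then show False using no j by blast
    qed
    have exw: "\<exists>w. w \<in> ?Z \<and> w \<in> K \<and> w \<noteq> 0"
    proof (rule ccontr)
      assume no: "\<not> ?thesis"
      obtain k where k: "k \<in> K" "k \<noteq> 0" using K0 L.subspace_0[OF sK] by blast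
      have "k \<in> ?Z" unfolding lie_center_def
      proof (clarify)
        fix a
        obtain j k' where jk: "j \<in> J" "k' \<in> K" "a = j + k'" using dec by blast
        then have "br k a = br k k'" by (simp add: L.br_add_r cross' k)
        moreover have "br k k' = 0" using no centr idK2[OF k(1)] by blast
        ultimately show "br k a = 0" by simp
      qed
      then show False using no k by blast
    qed
    then obtain w where w: "w \<in> ?Z" "w \<in> K" "w \<noteq> 0" by blast
    from exu obtain u where u: "u \<in> ?Z" "u \<in> J" "u \<noteq> 0" by blast
    obtain a b where uab: "u = sc a y1 + sc b y2" using u(1) Zc by blast
    obtain c d where wcd: "w = sc c y1 + sc d y2" using w(1) Zc by blast
    have uw0: "s = 0 \<and> t = 0" if "sc s u + sc t w = 0" for s t
    proof -
      have e1: "sc s u = sc (-t) w" using that by (simp add: eq_neg_iff_add_eq_0)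
      have hJ: "sc s u \<in> J" by (rule L.subspace_scale[OF sJ u(2)])
      have hK: "sc (-t) w \<in> K" by (rule L.subspace_scale[OF sK w(2)])
      have "sc s u = 0" using JK0[of "sc s u"] hJ hK e1 by metis
      moreover have "sc (-t) w = 0" using \<open>sc s u = 0\<close> e1 by simp
      ultimately show ?thesis using u(3) w(3) L.scale_eq_0_iff by auto
    qed
    define D where "D = a * d - b * c"
    have D0: "D \<noteq> 0"
    proof
      assume D: "D = 0"
      have "sc d u + sc (-b) w = sc (d*a + -b*c) y1 + sc (d*b + -b*d) y2"
        unfolding uab wcd by (rule L.comb2)
      also have "\<dots> = 0" using D by (simp add: D_def algebra_simps)
      finally have "d = 0 \<and> b = 0" using uw0 by fastforce
      moreover have "c = 0 \<and> a = 0"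
      proof -
        have "sc (-c) u + sc a w = sc (-c*a + a*c) y1 + sc (-c*b + a*d) y2"
          unfolding uab wcd by (rule L.comb2)
        also have "\<dots> = 0" using D by (simp add: D_def algebra_simps)
        finally show ?thesis using uw0 by fastforce
      qed
      ultimately show False using uab u(3) by simp
    qed
    have Zuw: "\<exists>s t. z = sc s u + sc t w" if zZ: "z \<in> ?Z" for z
    proof -
      obtain p q where z: "z = sc p y1 + sc q y2" using zZ Zc by blast
      define s where "s = (p*d - q*c) / D"
      define t where "t = (q*a - p*b) / D"
      have "sc s u + sc t w = sc (s*a + t*c) y1 + sc (s*b + t*d) y2"
        unfolding uab wcd by (rule L.comb2)
      also have "s*a + t*c = p"
      proof -
        have "s*a + t*c = ((p*d - q*c)*a + (q*a - p*b)*c) / D"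
          by (simp add: s_def t_def add_divide_distrib)
        also have "(p*d - q*c)*a + (q*a - p*b)*c = p * D" by (simp add: D_def algebra_simps)
        finally show ?thesis using D0 by simp
      qed
      also have "s*b + t*d = q"
      proof -
        have "s*b + t*d = ((p*d - q*c)*b + (q*a - p*b)*d) / D"
          by (simp add: s_def t_def add_divide_distrib)
        also have "(p*d - q*c)*b + (q*a - p*b)*d = q * D" by (simp add: D_def algebra_simps)
        finally show ?thesis using D0 by simp
      qed
      finally show ?thesis using z by metis
    qed
    have ZJ: "\<exists>s. z = sc s u" if zZ: "z \<in> ?Z" and zJ: "z \<in> J" for z
    proof -
      obtain s t where st: "z = sc s u + sc t w" using Zuw[OF zZ] by blast
      have "sc t w = z - sc s u" using st by simp
      moreover have "z - sc s u \<in> J" using L.subspace_diff[OF sJ zJ L.subspace_scale[OF sJ u(2)]] .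
      moreover have "sc t w \<in> K" by (rule L.subspace_scale[OF sK w(2)])
      ultimately have "sc t w = 0" using JK0 by metis
      then show ?thesis using st by auto
    qed
    have ZK: "\<exists>t. z = sc t w" if zZ: "z \<in> ?Z" and zJ: "z \<in> K" for z
    proof -
      obtain s t where st: "z = sc s u + sc t w" using Zuw[OF zZ] by blast
      have "sc s u = z - sc t w" using st by simp
      moreover have "z - sc t w \<in> K" using L.subspace_diff[OF sK zJ L.subspace_scale[OF sK w(2)]] .
      moreover have "sc s u \<in> J" by (rule L.subspace_scale[OF sJ u(2)])
      ultimately have "sc s u = 0" using JK0 by metis
      then show ?thesis using st by auto
    qed
    have "\<forall>i. \<exists>jk. fst jk \<in> J \<and> snd jk \<in> K \<and> x i = fst jk + snd jk"
    proof
      fix i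
      obtain j k where "j \<in> J" "k \<in> K" "x i = j + k" using dec by blast
      then show "\<exists>jk. fst jk \<in> J \<and> snd jk \<in> K \<and> x i = fst jk + snd jk"
        by (intro exI[of _ "(j, k)"]) simp
    qed
    from choice[OF this] obtain f where f: "\<And>i. fst (f i) \<in> J \<and> snd (f i) \<in> K \<and> x i = fst (f i) + snd (f i)"
      by blast
    define jj where "jj i = fst (f i)" for i
    define kk where "kk i = snd (f i)" for i
    have jjJ: "jj i \<in> J" and kkK: "kk i \<in> K" and xjk: "x i = jj i + kk i" for i
      using f[of i] by (auto simp: jj_def kk_def)
    have "\<forall>i. \<exists>cpq. jj i = (\<Sum>r\<in>UNIV. sc (fst cpq r) (x r)) + sc (fst (snd cpq)) y1 + sc (snd (snd cpq)) y2"
    proof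
      fix i
      obtain cc p q where "jj i = (\<Sum>r\<in>UNIV. sc (cc r) (x r)) + sc p y1 + sc q y2"
        using L.spanX[OF y12(4) y12(7)] by blast
      then show "\<exists>cpq. jj i = (\<Sum>r\<in>UNIV. sc (fst cpq r) (x r)) + sc (fst (snd cpq)) y1 + sc (snd (snd cpq)) y2"
        by (intro exI[of _ "(cc, p, q)"]) simp
    qed
    from choice[OF this] obtain g where g: "\<And>i. jj i = (\<Sum>r\<in>UNIV. sc (fst (g i) r) (x r)) + sc (fst (snd (g i))) y1 + sc (snd (snd (g i))) y2"
      by blast
    define P where "P i r = fst (g i) r" for i r
    define zz where "zz i = sc (fst (snd (g i))) y1 + sc (snd (snd (g i))) y2" for i
    define Q where "Q i r = (if i = r then 1 else 0) - P i r" for i r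
    have zzZ: "zz i \<in> ?Z" for i unfolding zz_def Zc by blast
    have jjP: "jj i = (\<Sum>r\<in>UNIV. sc (P i r) (x r)) + zz i" for i
      using g[of i] by (simp add: P_def zz_def add.assoc)
    have xsum: "(\<Sum>r\<in>UNIV. sc (if i = r then 1 else 0) (x r)) = x i" for i
    proof -
      have "(\<Sum>r\<in>UNIV. sc (if i = r then 1 else 0) (x r)) = (\<Sum>r\<in>UNIV. if i = r then x r else 0)"
        by (rule sum.cong) auto
      then show ?thesis by simp
    qed
    have kkQ: "kk i = (\<Sum>r\<in>UNIV. sc (Q i r) (x r)) + (- zz i)" for i
    proof -
      have "kk i = x i - jj i" using xjk[of i] by (simp add: algebra_simps)
      also have "\<dots> = (\<Sum>r\<in>UNIV. sc (if i = r then 1 else 0) (x r)) - ((\<Sum>r\<in>UNIV. sc (P i r) (x r)) + zz i)"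
        using xsum jjP by simp
      also have "\<dots> = (\<Sum>r\<in>UNIV. sc (Q i r) (x r)) + (- zz i)"
        by (simp add: Q_def L.scale_left_diff_distrib sum_subtractf)
      finally show ?thesis .
    qed
    have nzzZ: "- zz i \<in> ?Z" for i using L.subspace_neg[OF subZ zzZ] .
    define G where "G i m = (SOME s. br (jj i) (jj m) = sc s u)" for i m
    define H where "H i m = (SOME t. br (kk i) (kk m) = sc t w)" for i m
    have G: "br (jj i) (jj m) = sc (G i m) u" for i m
    proof -
      have "\<exists>s. br (jj i) (jj m) = sc s u" using ZJ centr idJ2[OF jjJ] by blast
      then show ?thesis unfolding G_def by (rule someI_ex)
    qed
    have H: "br (kk i) (kk m) = sc (H i m) w" for i m
    proof -
      have "\<exists>t. br (kk i) (kk m) = sc t w" using ZK centr idK2[OF kkK] by blast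
      then show ?thesis unfolding H_def by (rule someI_ex)
    qed
    have AB: "A$i$m = G i m * a + H i m * c \<and> B$i$m = G i m * b + H i m * d" for i m
    proof -
      have "br (x i) (x m) = br (jj i + kk i) (jj m + kk m)" by (simp only: xjk)
      also have "\<dots> = br (jj i) (jj m) + br (kk i) (kk m)"
        by (simp add: L.br_add_l L.br_add_r cross[OF jjJ kkK] cross'[OF jjJ kkK])
      also have "\<dots> = sc (G i m) u + sc (H i m) w" by (simp add: G H)
      also have "\<dots> = sc (G i m * a + H i m * c) y1 + sc (G i m * b + H i m * d) y2"
        unfolding uab wcd by (rule L.comb2)
      finally have "sc (A$i$m) y1 + sc (B$i$m) y2 = sc (G i m * a + H i m * c) y1 + sc (G i m * b + H i m * d) y2"
        using tensor[of i m] by simp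
      then show ?thesis by (rule ind2)
    qed
    have PG: "(\<Sum>l\<in>UNIV. \<Sum>r\<in>UNIV. P i l * P m r * A$l$r) = G i m * a \<and>
              (\<Sum>l\<in>UNIV. \<Sum>r\<in>UNIV. P i l * P m r * B$l$r) = G i m * b" for i m
    proof -
      have "sc (\<Sum>l\<in>UNIV. \<Sum>r\<in>UNIV. P i l * P m r * A$l$r) y1 + sc (\<Sum>l\<in>UNIV. \<Sum>r\<in>UNIV. P i l * P m r * B$l$r) y2
          = br ((\<Sum>r\<in>UNIV. sc (P i r) (x r)) + zz i) ((\<Sum>r\<in>UNIV. sc (P m r) (x r)) + zz m)"
        by (rule L.coef[OF tensor zzZ zzZ, symmetric])
      also have "\<dots> = br (jj i) (jj m)" by (simp only: jjP)
      also have "\<dots> = sc (G i m * a) y1 + sc (G i m * b) y2"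
        by (simp add: G uab L.scale_right_distrib)
      finally show ?thesis by (rule ind2)
    qed
    have QH: "(\<Sum>l\<in>UNIV. \<Sum>r\<in>UNIV. Q i l * Q m r * A$l$r) = H i m * c \<and>
              (\<Sum>l\<in>UNIV. \<Sum>r\<in>UNIV. Q i l * Q m r * B$l$r) = H i m * d" for i m
    proof -
      have "sc (\<Sum>l\<in>UNIV. \<Sum>r\<in>UNIV. Q i l * Q m r * A$l$r) y1 + sc (\<Sum>l\<in>UNIV. \<Sum>r\<in>UNIV. Q i l * Q m r * B$l$r) y2
          = br ((\<Sum>r\<in>UNIV. sc (Q i r) (x r)) + (- zz i)) ((\<Sum>r\<in>UNIV. sc (Q m r) (x r)) + (- zz m))"
        by (rule L.coef[OF tensor nzzZ nzzZ, symmetric])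
      also have "\<dots> = br (kk i) (kk m)" by (simp only: kkQ)
      also have "\<dots> = sc (H i m * c) y1 + sc (H i m * d) y2"
        by (simp add: H wcd L.scale_right_distrib)
      finally show ?thesis by (rule ind2)
    qed
    have idem: "(\<Sum>l\<in>UNIV. P i l * P l r) = P i r" for i r
    proof -
      define e where "e = (\<Sum>l\<in>UNIV. sc (P i l) (jj l)) - jj i"
      have eJ: "e \<in> J" unfolding e_def
        by (intro L.subspace_diff[OF sJ] L.subspace_sum[OF sJ] L.subspace_scale[OF sJ] jjJ)
      define kks where "kks = (\<Sum>l\<in>UNIV. sc (P i l) (kk l))"
      have kksK: "kks \<in> K" unfolding kks_def
        by (intro L.subspace_sum[OF sK] L.subspace_scale[OF sK] kkK)
      have sx: "(\<Sum>l\<in>UNIV. sc (P i l) (x l)) = (\<Sum>l\<in>UNIV. sc (P i l) (jj l)) + kks"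
        unfolding kks_def by (simp add: xjk L.scale_right_distrib sum.distrib)
      have ex: "e = - zz i - kks"
        using jjP[of i] sx unfolding e_def by (simp add: algebra_simps)
      obtain s t where st: "zz i = sc s u + sc t w" using Zuw[OF zzZ] by blast
      have "e + sc s u \<in> J" using L.subspace_add[OF sJ eJ L.subspace_scale[OF sJ u(2)]] .
      moreover have "e + sc s u = - kks - sc t w" unfolding ex st by (simp add: algebra_simps)
      moreover have "- kks - sc t w \<in> K"
        using L.subspace_diff[OF sK L.subspace_neg[OF sK kksK] L.subspace_scale[OF sK w(2)]] .
      ultimately have "e + sc s u = 0" by (intro JK0) simp_all
      then have "e = - sc s u" by (simp add: eq_neg_iff_add_eq_0)
      then have eZ: "e \<in> ?Z" using L.subspace_neg[OF subZ L.subspace_scale[OF subZ u(1)]] by simp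
      define zs where "zs = (\<Sum>l\<in>UNIV. sc (P i l) (zz l))"
      have zsZ: "zs \<in> ?Z" unfolding zs_def
        by (intro L.subspace_sum[OF subZ] L.subspace_scale[OF subZ] zzZ)
      have sj: "(\<Sum>l\<in>UNIV. sc (P i l) (jj l)) = (\<Sum>r\<in>UNIV. sc (\<Sum>l\<in>UNIV. P i l * P l r) (x r)) + zs"
      proof -
        have "(\<Sum>l\<in>UNIV. sc (P i l) (jj l)) = (\<Sum>l\<in>UNIV. \<Sum>r\<in>UNIV. sc (P i l * P l r) (x r)) + zs"
          by (simp add: jjP zs_def L.scale_right_distrib sum.distrib L.scale_sum_right)
        also have "(\<Sum>l\<in>UNIV. \<Sum>r\<in>UNIV. sc (P i l * P l r) (x r)) = (\<Sum>r\<in>UNIV. sc (\<Sum>l\<in>UNIV. P i l * P l r) (x r))"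
          by (subst sum.swap) (simp add: L.scale_sum_left)
        finally show ?thesis .
      qed
      have "(\<Sum>r\<in>UNIV. sc ((\<Sum>l\<in>UNIV. P i l * P l r) - P i r) (x r)) = e + zz i - zs"
      proof -
        have "(\<Sum>r\<in>UNIV. sc ((\<Sum>l\<in>UNIV. P i l * P l r) - P i r) (x r))
            = (\<Sum>r\<in>UNIV. sc (\<Sum>l\<in>UNIV. P i l * P l r) (x r)) - (\<Sum>r\<in>UNIV. sc (P i r) (x r))"
          by (simp add: L.scale_left_diff_distrib sum_subtractf)
        also have "\<dots> = e + zz i - zs"
          using sj jjP[of i] unfolding e_def by (simp add: algebra_simps)
        finally show ?thesis .
      qed
      also have "\<dots> \<in> ?Z"
        by (intro L.subspace_diff[OF subZ] L.subspace_add[OF subZ] eZ zzZ zsZ)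
      finally obtain p q where pq: "(\<Sum>r\<in>UNIV. sc ((\<Sum>l\<in>UNIV. P i l * P l r) - P i r) (x r)) = sc p y1 + sc q y2"
        using Zc by blast
      have "(\<Sum>r\<in>UNIV. sc ((\<Sum>l\<in>UNIV. P i l * P l r) - P i r) (x r)) + sc (-p) y1 + sc (-q) y2 = 0"
        using pq by simp
      from L.indX[OF y12(4) y12(5) y12(1) y12(6) this]
      show ?thesis by simp
    qed
    define Pm :: "complex^'n^'n" where "Pm = (\<chi> i r. P i r)"
    define Qm :: "complex^'n^'n" where "Qm = mat 1 - Pm"
    define Et where "Et = transpose Pm"
    define M1 :: "complex^'n^'n" where "M1 = (\<chi> i j. d * A $ i $ j + (-c) * B $ i $ j)"
    define M2 :: "complex^'n^'n" where "M2 = (\<chi> i j. (-b) * A $ i $ j + a * B $ i $ j)"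
    have Qe: "Qm $ i $ r = Q i r" for i r by (simp add: Qm_def Pm_def Q_def mat_def)
    have M1e: "M1 = (Pm ** M1) ** transpose Pm"
    proof -
      have "M1 $ i $ m = ((Pm ** M1) ** transpose Pm) $ i $ m" for i m
      proof -
        have "((Pm ** M1) ** transpose Pm) $ i $ m = (\<Sum>l\<in>UNIV. \<Sum>r\<in>UNIV. P i l * P m r * (d * A$l$r + (-c) * B$l$r))"
          by (simp add: mat_entry Pm_def M1_def)
        also have "\<dots> = d * (\<Sum>l\<in>UNIV. \<Sum>r\<in>UNIV. P i l * P m r * A$l$r) + (-c) * (\<Sum>l\<in>UNIV. \<Sum>r\<in>UNIV. P i l * P m r * B$l$r)"
          unfolding sum_distrib_left sum.distrib[symmetric]
          by (intro sum.cong refl) (simp add: algebra_simps)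
        also have "\<dots> = M1 $ i $ m"
          using PG[of i m] AB[of i m] by (simp add: M1_def algebra_simps)
        finally show ?thesis by simp
      qed
      then show ?thesis by (simp add: vec_eq_iff)
    qed
    have M2e: "M2 = (Qm ** M2) ** transpose Qm"
    proof -
      have "M2 $ i $ m = ((Qm ** M2) ** transpose Qm) $ i $ m" for i m
      proof -
        have "((Qm ** M2) ** transpose Qm) $ i $ m = (\<Sum>l\<in>UNIV. \<Sum>r\<in>UNIV. Q i l * Q m r * ((-b) * A$l$r + a * B$l$r))"
          by (simp add: mat_entry Qe M2_def)
        also have "\<dots> = (-b) * (\<Sum>l\<in>UNIV. \<Sum>r\<in>UNIV. Q i l * Q m r * A$l$r) + a * (\<Sum>l\<in>UNIV. \<Sum>r\<in>UNIV. Q i l * Q m r * B$l$r)"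
          unfolding sum_distrib_left sum.distrib[symmetric]
          by (intro sum.cong refl) (simp add: algebra_simps)
        also have "\<dots> = M2 $ i $ m"
          using QH[of i m] AB[of i m] by (simp add: M2_def algebra_simps)
        finally show ?thesis by simp
      qed
      then show ?thesis by (simp add: vec_eq_iff)
    qed
    have r1: "rank M1 \<le> rank Et"
      using rank_mul_le_right_gen[of "Pm ** M1" "transpose Pm"] M1e by (simp add: Et_def)
    have tQ: "transpose Qm = mat 1 - Et"
      by (simp add: vec_eq_iff Qm_def Et_def transpose_def mat_def)
    have r2: "rank M2 \<le> rank (mat 1 - Et)"
      using rank_mul_le_right_gen[of "Qm ** M2" "transpose Qm"] M2e by (simp add: tQ)
    have PP: "Pm ** Pm = Pm"
      by (simp add: vec_eq_iff matrix_matrix_mult_def Pm_def idem)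
    have EE: "Et ** Et = Et"
      unfolding Et_def by (simp add: matrix_transpose_mul[symmetric] PP)
    have r3: "rank Et + rank (mat 1 - Et) \<le> CARD('n)" by (rule rank_idem_sum[OF EE])
    have "d * a - (-c) * (-b) \<noteq> 0" using D0 by (simp add: D_def algebra_simps)
    from hyp[OF this] have "rank M1 + rank M2 > CARD('n)" by (simp add: M1_def M2_def)
    with r1 r2 r3 show False by linarith
  qed
qed

end
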